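(* Let $\bm{d}\in\mathbb{R}^n$ with $\|\bm{d}\|_2=1$, and let $\bm{a}\sim\mathcal{N}(\bm{0},\bm{I}_n)$. Then for every $\tau\ge 0$, $$\mathbb{E}\!\left[\langle\bm{a},\bm{d}\rangle^2 \,\middle|\, \langle\bm{a},\bm{d}\rangle^2\ge\tau\right]\ \ge\ \frac{6-\tau\,\mathrm{erf}(\sqrt{\tau})}{6-3\,\mathrm{erf}(\sqrt{\tau})}.$$
   Context: The Gauss error function is $\mathrm{erf}(x):=\frac{1}{\sqrt{\pi}}\int_{-x}^{x}e^{-u^2}\,du$. *)

theory Defs
  imports "HOL-Probability.Probability"
begin

definition erf :: "real \<Rightarrow> real" where
  "erf x = (1 / sqrt pi) * integral {-x..x} (\<lambda>u. exp (- u\<^sup>2))"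

definition std_gaussian :: "'a::euclidean_space measure" where
  "std_gaussian = density lborel (\<lambda>x. \<Prod>b\<in>Basis. ennreal (std_normal_density (x \<bullet> b)))"

definition cond_exp_event :: "'a measure \<Rightarrow> ('a \<Rightarrow> real) \<Rightarrow> 'a set \<Rightarrow> real" where
  "cond_exp_event M X A = (\<integral>x. indicator A x * X x \<partial>M) / measure M A"

end

theory Submission
  imports Defs
begin


abbreviation "NN \<equiv> density lborel (\<lambda>x. ennreal (std_normal_density x))"

lemma PiM_density_std:
  "density (\<Pi>\<^sub>M b\<in>(Basis::'a::euclidean_space set). lborel) (\<lambda>f. \<Prod>b\<in>Basis. ennreal (std_normal_density (f b)))
    = (\<Pi>\<^sub>M b\<in>(Basis::'a set). NN)"
proof -
  interpret product_sigma_finite "\<lambda>_::'a. NN"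
    unfolding product_sigma_finite_def
    using prob_space_normal_density[of 1 0] prob_space_imp_sigma_finite by auto
  interpret L: product_sigma_finite "\<lambda>_::'a. lborel"
    by (simp add: product_sigma_finite_def lborel.sigma_finite_measure_axioms)
  show ?thesis
  proof (rule PiM_eqI)
    show "finite (Basis::'a set)" by simp
    show "sets (density (\<Pi>\<^sub>M b\<in>(Basis::'a set). lborel) (\<lambda>f. \<Prod>b\<in>Basis. ennreal (std_normal_density (f b))))
       = sets (\<Pi>\<^sub>M b\<in>(Basis::'a set). NN)"
      unfolding sets_density by (rule sets_PiM_cong) simp_all
    fix A assume A: "\<And>i. i \<in> (Basis::'a set) \<Longrightarrow> A i \<in> sets NN"
    have Ab: "\<And>i. i \<in> (Basis::'a set) \<Longrightarrow> A i \<in> sets borel" using A by simp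
    have "Pi\<^sub>E Basis A \<in> sets (\<Pi>\<^sub>M b\<in>(Basis::'a set). lborel)"
      using Ab by (intro sets_PiM_I_finite) auto
    then have "emeasure (density (\<Pi>\<^sub>M b\<in>(Basis::'a set). lborel) (\<lambda>f. \<Prod>b\<in>Basis. ennreal (std_normal_density (f b)))) (Pi\<^sub>E Basis A)
       = (\<integral>\<^sup>+ f. (\<Prod>b\<in>Basis. ennreal (std_normal_density (f b))) * indicator (Pi\<^sub>E Basis A) f \<partial>(\<Pi>\<^sub>M b\<in>(Basis::'a set). lborel))"
      by (subst emeasure_density) auto
    also have "\<dots> = (\<integral>\<^sup>+ f. (\<Prod>b\<in>Basis. ennreal (std_normal_density (f b)) * indicator (A b) (f b)) \<partial>(\<Pi>\<^sub>M b\<in>(Basis::'a set). lborel))"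
    proof (intro nn_integral_cong)
      fix f :: "'a \<Rightarrow> real" assume "f \<in> space (\<Pi>\<^sub>M b\<in>(Basis::'a set). lborel)"
      then have "f \<in> extensional Basis" by (simp add: space_PiM PiE_def)
      then show "(\<Prod>b\<in>Basis. ennreal (std_normal_density (f b))) * indicator (Pi\<^sub>E Basis A) f
          = (\<Prod>b\<in>Basis. ennreal (std_normal_density (f b)) * indicator (A b) (f b))"
        by (auto simp add: prod.distrib indicator_def PiE_def Pi_def)
    qed
    also have "\<dots> = (\<Prod>b\<in>Basis. \<integral>\<^sup>+ x. ennreal (std_normal_density x) * indicator (A b) x \<partial>lborel)"
      using Ab by (intro L.product_nn_integral_prod) auto
    also have "\<dots> = (\<Prod>b\<in>Basis. emeasure NN (A b))"
      using Ab by (intro prod.cong refl) (simp add: emeasure_density)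
    finally show "emeasure (density (\<Pi>\<^sub>M b\<in>(Basis::'a set). lborel) (\<lambda>f. \<Prod>b\<in>Basis. ennreal (std_normal_density (f b)))) (Pi\<^sub>E Basis A)
       = (\<Prod>b\<in>Basis. emeasure NN (A b))" .
  qed
qed

lemma inner_sum_Basis_coord:
  fixes f :: "'a::euclidean_space \<Rightarrow> real"
  assumes "b \<in> Basis"
  shows "(\<Sum>b'\<in>Basis. f b' *\<^sub>R b') \<bullet> b = f b"
  using assms by (simp add: inner_sum_left inner_Basis if_distrib cong: if_cong)

lemma std_gaussian_eq:
  "(std_gaussian :: 'a::euclidean_space measure) =
     distr (\<Pi>\<^sub>M b\<in>(Basis::'a set). NN) borel (\<lambda>f. \<Sum>b\<in>Basis. f b *\<^sub>R b)"
proof -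
  have "(std_gaussian :: 'a measure) = density (distr (\<Pi>\<^sub>M b\<in>(Basis::'a set). lborel) borel (\<lambda>f. \<Sum>b\<in>Basis. f b *\<^sub>R b))
      (\<lambda>x. \<Prod>b\<in>Basis. ennreal (std_normal_density (x \<bullet> b)))"
    unfolding std_gaussian_def by (subst lborel_eq) (rule refl)
  also have "\<dots> = distr (density (\<Pi>\<^sub>M b\<in>(Basis::'a set). lborel)
      (\<lambda>f. \<Prod>b\<in>Basis. ennreal (std_normal_density ((\<Sum>b'\<in>Basis. f b' *\<^sub>R b') \<bullet> b)))) borel (\<lambda>f. \<Sum>b\<in>Basis. f b *\<^sub>R b)"
    by (rule density_distr) auto
  also have "density (\<Pi>\<^sub>M b\<in>(Basis::'a set). lborel)
      (\<lambda>f. \<Prod>b\<in>Basis. ennreal (std_normal_density ((\<Sum>b'\<in>Basis. f b' *\<^sub>R b') \<bullet> b)))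
     = density (\<Pi>\<^sub>M b\<in>(Basis::'a set). lborel) (\<lambda>f. \<Prod>b\<in>Basis. ennreal (std_normal_density (f b)))"
    by (rule density_cong) (auto simp: inner_sum_Basis_coord cong: prod.cong)
  finally show ?thesis by (simp add: PiM_density_std)
qed

abbreviation "PP \<equiv> (\<Pi>\<^sub>M b\<in>(Basis::'a::euclidean_space set). NN)"

lemma prob_space_NN: "prob_space NN"
  using prob_space_normal_density[of 1 0] by simp

lemma prob_space_PP: "prob_space (PP :: ('a::euclidean_space \<Rightarrow> real) measure)"
  by (intro prob_space_PiM) (simp add: prob_space_NN)

lemma distr_PP_component:
  assumes "b \<in> (Basis::'a::euclidean_space set)"
  shows "distr (PP :: ('a \<Rightarrow> real) measure) lborel (\<lambda>f. f b) = NN"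
proof -
  have "distr (PP :: ('a \<Rightarrow> real) measure) lborel (\<lambda>f. f b) = distr (PP :: ('a \<Rightarrow> real) measure) NN (\<lambda>f. f b)"
    by (rule distr_cong) auto
  also have "\<dots> = NN"
    using assms by (intro distr_PiM_component) (auto simp: prob_space_NN)
  finally show ?thesis .
qed

lemma indep_PP_components:
  "prob_space.indep_vars (PP :: ('a::euclidean_space \<Rightarrow> real) measure) (\<lambda>_. borel) (\<lambda>b f. f b) (Basis::'a set)"
proof -
  interpret prob_space "PP :: ('a \<Rightarrow> real) measure" by (rule prob_space_PP)
  have rv: "\<And>b. b \<in> (Basis::'a set) \<Longrightarrow> random_variable borel (\<lambda>f::'a\<Rightarrow>real. f b)"
    by simp
  have "distr (PP :: ('a \<Rightarrow> real) measure) (\<Pi>\<^sub>M b\<in>(Basis::'a set). borel) (\<lambda>x. \<lambda>b\<in>Basis. x b)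
      = distr (PP :: ('a \<Rightarrow> real) measure) PP (\<lambda>x. x)"
    by (rule distr_cong) (auto simp: space_PiM PiE_def extensional_restrict intro!: sets_PiM_cong)
  also have "\<dots> = (\<Pi>\<^sub>M b\<in>(Basis::'a set). distr (PP :: ('a \<Rightarrow> real) measure) borel (\<lambda>f. f b))"
  proof -
    have "\<And>b. b \<in> (Basis::'a set) \<Longrightarrow> distr (PP :: ('a \<Rightarrow> real) measure) borel (\<lambda>f. f b) = NN"
      using distr_PP_component by (metis distr_cong sets_lborel)
    then show ?thesis by (simp cong: PiM_cong)
  qed
  finally show ?thesis
    by (subst indep_vars_iff_distr_eq_PiM') (auto simp: rv)
qed

lemma PP_lincomb_normal:
  fixes c :: "'a::euclidean_space \<Rightarrow> real"
  assumes c1: "(\<Sum>b\<in>(Basis::'a set). (c b)\<^sup>2) = 1"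
  shows "distributed (PP :: ('a \<Rightarrow> real) measure) lborel (\<lambda>f. \<Sum>b\<in>Basis. f b * c b) std_normal_density"
proof -
  interpret prob_space "PP :: ('a \<Rightarrow> real) measure" by (rule prob_space_PP)
  define I where "I = {b\<in>(Basis::'a set). c b \<noteq> 0}"
  have finI: "finite I" unfolding I_def by simp
  have I_ne: "I \<noteq> {}"
  proof
    assume "I = {}"
    then have "\<And>b. b \<in> (Basis::'a set) \<Longrightarrow> c b = 0" unfolding I_def by auto
    then have "(\<Sum>b\<in>(Basis::'a set). (c b)\<^sup>2) = 0" by simp
    with c1 show False by simp
  qed
  have sumI: "(\<lambda>f::'a\<Rightarrow>real. \<Sum>b\<in>Basis. f b * c b) = (\<lambda>f. \<Sum>b\<in>I. f b * c b)"
    unfolding I_def by (intro ext sum.mono_neutral_right) auto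
  have sq: "(\<Sum>b\<in>I. (\<bar>c b\<bar>)\<^sup>2) = 1"
    using c1 unfolding I_def by (subst (asm) sum.mono_neutral_right[of Basis "{b\<in>(Basis::'a set). c b \<noteq> 0}"]) auto
  have ind: "indep_vars (\<lambda>_. borel) (\<lambda>b f. f b * c b) I"
  proof -
    have "indep_vars (\<lambda>_. borel) (\<lambda>b f. f b) I"
      using indep_PP_components by (rule indep_vars_subset) (auto simp: I_def)
    then show ?thesis
      by (rule indep_vars_compose2[where Y="\<lambda>b x. x * c b" and N="\<lambda>_. borel"]) auto
  qed
  have dist: "distributed PP lborel (\<lambda>f. f b * c b) (normal_density 0 \<bar>c b\<bar>)" if b: "b \<in> I" for b
  proof -
    have d0: "distributed PP lborel (\<lambda>f. f b) (normal_density 0 1)"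
      unfolding distributed_def using b distr_PP_component[of b] by (auto simp: I_def)
    have "distributed PP lborel (\<lambda>f. 0 + c b * f b) (normal_density (0 + c b * 0) (\<bar>c b\<bar> * 1))"
      by (rule normal_density_affine[OF d0]) (use b in \<open>auto simp: I_def\<close>)
    then show ?thesis by (simp add: mult.commute)
  qed
  have "distributed PP lborel (\<lambda>f. \<Sum>b\<in>I. f b * c b)
      (normal_density (\<Sum>b\<in>I. 0) (sqrt (\<Sum>b\<in>I. (\<bar>c b\<bar>)\<^sup>2)))"
    by (rule sum_indep_normal[OF finI I_ne ind]) (auto simp: I_def dist)
  moreover have "(\<Sum>b\<in>I. (c b)\<^sup>2) = 1" using sq by simp
  ultimately show ?thesis by (simp add: sumI)
qed

lemma std_gaussian_proj:
  fixes d :: "'a::euclidean_space"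
  assumes "norm d = 1"
  shows "distributed (std_gaussian :: 'a measure) lborel (\<lambda>a. a \<bullet> d) std_normal_density"
proof -
  have c1: "(\<Sum>b\<in>(Basis::'a set). (b \<bullet> d)\<^sup>2) = 1"
  proof -
    have "d \<bullet> d = 1" using assms by (simp add: norm_eq_sqrt_inner)
    then show ?thesis by (simp add: euclidean_inner[of d d] power2_eq_square inner_commute)
  qed
  have D: "distributed (PP :: ('a \<Rightarrow> real) measure) lborel (\<lambda>f. \<Sum>b\<in>Basis. f b * (b \<bullet> d)) std_normal_density"
    by (rule PP_lincomb_normal[OF c1])
  have "distr (std_gaussian :: 'a measure) lborel (\<lambda>a. a \<bullet> d)
      = distr (PP :: ('a \<Rightarrow> real) measure) lborel ((\<lambda>a. a \<bullet> d) \<circ> (\<lambda>f. \<Sum>b\<in>Basis. f b *\<^sub>R b))"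
    unfolding std_gaussian_eq by (rule distr_distr) auto
  also have "\<dots> = distr (PP :: ('a \<Rightarrow> real) measure) lborel (\<lambda>f. \<Sum>b\<in>Basis. f b * (b \<bullet> d))"
    by (rule distr_cong) (auto simp: inner_sum_left)
  finally show ?thesis
    using D unfolding distributed_def by (auto simp: std_gaussian_eq)
qed



lemma poly_piece:
  fixes s u v :: real
  assumes "0 \<le> u" "u \<le> s" "s \<le> v"
    and "876/625 - 683/5000 * v^2 - 53599/75000 * v^4 + 11252969/75000000 * u^5
        + 2821/25000 * u^6 - 11252969/225000000 * v^7 + 11252969/750000000 * u^9 > 0"
  shows "876/625 - 683/5000 * s^2 - 53599/75000 * s^4 + 11252969/75000000 * s^5
        + 2821/25000 * s^6 - 11252969/225000000 * s^7 + 11252969/750000000 * s^9 \<ge> 0"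
proof -
  have "v^2 \<ge> s^2" "v^4 \<ge> s^4" "v^7 \<ge> s^7" using assms by (auto intro!: power_mono)
  moreover have "u^5 \<le> s^5" "u^6 \<le> s^6" "u^9 \<le> s^9" using assms by (auto intro!: power_mono)
  moreover have "s^2 \<ge> 0" "s^5 \<ge> 0" "s^6 \<ge> 0" "s^9 \<ge> 0" using assms by auto
  ultimately show ?thesis using assms(4) by linarith
qed

lemma poly_main:
  fixes s :: real
  assumes "0 \<le> s" "s\<^sup>2 \<le> 3/2"
  shows "876/625 - 683/5000 * s^2 - 53599/75000 * s^4 + 11252969/75000000 * s^5
        + 2821/25000 * s^6 - 11252969/225000000 * s^7 + 11252969/750000000 * s^9 \<ge> 0"
proof -
  have "s \<le> 12248/10000"
  proof (rule ccontr)
    assume "\<not> ?thesis"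
    then have "(12248/10000)^2 < s^2" using assms(1) by (intro power_strict_mono) auto
    with assms(2) show False by (simp add: power2_eq_square)
  qed
  then consider "s \<le> 61/100" | "61/100 \<le> s" "s \<le> 91/100" | "91/100 \<le> s" "s \<le> 106/100"
    | "106/100 \<le> s" "s \<le> 114/100" | "114/100 \<le> s" "s \<le> 118/100" | "118/100 \<le> s" "s \<le> 12248/10000"
    by linarith
  then show ?thesis
  proof cases
    case 1 then show ?thesis using assms by (intro poly_piece[of 0 s "61/100"]) (simp_all add: power_divide)
  next
    case 2 then show ?thesis using assms by (intro poly_piece[of "61/100" s "91/100"]) (simp_all add: power_divide)
  next
    case 3 then show ?thesis using assms by (intro poly_piece[of "91/100" s "106/100"]) (simp_all add: power_divide)
  next
    case 4 then show ?thesis using assms by (intro poly_piece[of "106/100" s "114/100"]) (simp_all add: power_divide)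
  next
    case 5 then show ?thesis using assms by (intro poly_piece[of "114/100" s "118/100"]) (simp_all add: power_divide)
  next
    case 6 then show ?thesis using assms by (intro poly_piece[of "118/100" s "12248/10000"]) (simp_all add: power_divide)
  qed
qed

lemma poly_final:
  fixes s :: real
  assumes "0 \<le> s" "s\<^sup>2 \<le> 3/2"
  shows "2 * s * ((3989/10000) * (1 - s\<^sup>2/2)) * (6 - 3 * ((11284/10000) * (s - s^3/3 + s^5/10)))
     - (1 - 2 * (3989/10000) * (s - s^3/6)) * ((11284/10000) * (s - s^3/3 + s^5/10)) * (3 - s\<^sup>2) \<ge> 0"
proof -
  have eq: "2 * s * ((3989/10000) * (1 - s\<^sup>2/2)) * (6 - 3 * ((11284/10000) * (s - s^3/3 + s^5/10)))
     - (1 - 2 * (3989/10000) * (s - s^3/6)) * ((11284/10000) * (s - s^3/3 + s^5/10)) * (3 - s\<^sup>2)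
     = s * (876/625 - 683/5000 * s^2 - 53599/75000 * s^4 + 11252969/75000000 * s^5
        + 2821/25000 * s^6 - 11252969/225000000 * s^7 + 11252969/750000000 * s^9)"
    by (simp add: eval_nat_numeral field_simps)
  show ?thesis unfolding eq using poly_main[OF assms(1,2)] assms(1) by simp
qed

lemma exp_neg_upper2:
  fixes x :: real assumes "0 \<le> x"
  shows "exp (-x) \<le> 1 - x + x\<^sup>2/2"
proof -
  have a: "1 + x + x\<^sup>2/2 \<le> exp x" using exp_lower_Taylor_quadratic[OF assms] .
  have p: "0 < 1 + x + x\<^sup>2/2" using assms by (simp add: add_pos_nonneg)
  have "1 \<le> (1 + x + x\<^sup>2/2) * (1 - x + x\<^sup>2/2)"
    using assms by (simp add: algebra_simps power2_eq_square power4_eq_xxxx)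
  also have "\<dots> \<le> exp x * (1 - x + x\<^sup>2/2)"
  proof (rule mult_right_mono[OF a])
    show "0 \<le> 1 - x + x\<^sup>2/2"
      using sum_power2_ge_zero[of "x - 1" 1] by (simp add: power2_eq_square algebra_simps)
  qed
  finally have "1 \<le> exp x * (1 - x + x\<^sup>2/2)" .
  then have "exp (-x) * 1 \<le> exp (-x) * (exp x * (1 - x + x\<^sup>2/2))" by (intro mult_left_mono) auto
  then show ?thesis by (simp add: exp_minus field_simps)
qed

lemma exp_neg_lower1: "1 - (x::real) \<le> exp (-x)"
  using exp_ge_add_one_self[of "-x"] by simp

lemma poly_integral:
  fixes s :: real and F f :: "real \<Rightarrow> real"
  assumes "0 \<le> s" and "\<And>x. (F has_real_derivative f x) (at x)"
  shows "(f has_integral (F s - F (-s))) {-s..s}"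
  using assms by (intro fundamental_theorem_of_calculus)
    (auto simp: has_real_derivative_iff_has_vector_derivative[symmetric] intro: has_field_derivative_at_within)

lemma exp_sq_integrable: "(\<lambda>u::real. exp (- u\<^sup>2)) integrable_on {a..b}"
proof -
  have "continuous_on {a..b} (\<lambda>u::real. exp (- u\<^sup>2))" by (intro continuous_intros)
  then show ?thesis by (rule integrable_continuous_real)
qed

lemma erf_nonneg: "0 \<le> erf s"
  unfolding erf_def by (intro mult_nonneg_nonneg integral_nonneg exp_sq_integrable) auto

lemma erf_upper:
  fixes s :: real assumes "0 \<le> s"
  shows "erf s \<le> 11284/10000 * (s - s^3/3 + s^5/10)"
proof -
  have c1: "continuous_on {-s..s} (\<lambda>u::real. exp (- u\<^sup>2))"
    by (intro continuous_intros)
  have i1: "(\<lambda>u::real. exp (- u\<^sup>2)) integrable_on {-s..s}"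
    using c1 by (rule integrable_continuous_real)
  have h2: "((\<lambda>u::real. 1 - u\<^sup>2 + u^4/2) has_integral
      ((s - s^3/3 + s^5/10) - ((-s) - (-s)^3/3 + (-s)^5/10))) {-s..s}"
    by (rule poly_integral[OF assms]) (auto intro!: derivative_eq_intros simp: power2_eq_square power3_eq_cube field_simps)
  have le: "integral {-s..s} (\<lambda>u. exp (- u\<^sup>2)) \<le> integral {-s..s} (\<lambda>u::real. 1 - u\<^sup>2 + u^4/2)"
  proof (rule integral_le[OF i1])
    show "(\<lambda>u::real. 1 - u\<^sup>2 + u^4/2) integrable_on {-s..s}" using h2 by blast
    fix u :: real
    show "exp (- u\<^sup>2) \<le> 1 - u\<^sup>2 + u^4/2"
      using exp_neg_upper2[of "u\<^sup>2"] by (simp add: power2_eq_square power4_eq_xxxx)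
  qed
  also have "\<dots> = 2 * (s - s^3/3 + s^5/10)" using integral_unique[OF h2] by simp
  finally have I: "integral {-s..s} (\<lambda>u. exp (- u\<^sup>2)) \<le> 2 * (s - s^3/3 + s^5/10)" .
  have pi: "1 / sqrt pi \<le> 5642/10000"
  proof -
    have "(10000/5642)\<^sup>2 \<le> pi" using pi_approx by (simp add: power2_eq_square)
    then have "10000/5642 \<le> sqrt pi" by (rule real_le_rsqrt)
    then show ?thesis by (simp add: field_simps)
  qed
  have "0 \<le> integral {-s..s} (\<lambda>u. exp (- u\<^sup>2))" by (intro integral_nonneg exp_sq_integrable) auto
  then have "erf s \<le> 5642/10000 * integral {-s..s} (\<lambda>u. exp (- u\<^sup>2))"
    unfolding erf_def by (intro mult_right_mono pi)
  also have "\<dots> \<le> 5642/10000 * (2 * (s - s^3/3 + s^5/10))" using I by simp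
  finally show ?thesis by simp
qed

lemma set_integral_le_total:
  fixes f :: "real \<Rightarrow> real"
  assumes "integrable lborel f" "\<And>x. 0 \<le> f x"
  shows "integral {a..b} f \<le> (\<integral>x. f x \<partial>lborel)"
proof -
  have si: "set_integrable lborel {a..b} f"
    unfolding set_integrable_def by (rule integrable_mult_indicator) (auto simp: assms)
  have "integral {a..b} f = (LINT x:{a..b}|lborel. f x)"
    using set_borel_integral_eq_integral(2)[OF si] by simp
  also have "\<dots> \<le> (\<integral>x. f x \<partial>lborel)"
    unfolding set_lebesgue_integral_def
    using si assms unfolding set_integrable_def
    by (intro integral_mono) (auto simp: indicator_def)
  finally show ?thesis .
qed

lemma erf_le1: "erf s \<le> 1"
proof -
  have eq: "(\<lambda>u. normal_density 0 (sqrt (1/2)) u) = (\<lambda>u. 1 / sqrt pi * exp (- u\<^sup>2))"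
    by (simp add: normal_density_def)
  have "erf s = integral {-s..s} (\<lambda>u. normal_density 0 (sqrt (1/2)) u)"
    unfolding erf_def eq by simp
  also have "\<dots> \<le> (\<integral>u. normal_density 0 (sqrt (1/2)) u \<partial>lborel)"
    by (rule set_integral_le_total) auto
  also have "\<dots> = 1" by simp
  finally show ?thesis .
qed

lemma deriv_aux:
  fixes c x :: real
  shows "((\<lambda>z. z * (c * exp (- z\<^sup>2 / 2))) has_real_derivative
        (c * exp (- x\<^sup>2 / 2) - x\<^sup>2 * (c * exp (- x\<^sup>2 / 2)))) (at x)"
  by (auto intro!: derivative_eq_intros simp: power2_eq_square algebra_simps)

lemma phi_ftc:
  fixes s :: real assumes "0 \<le> s"
  shows "integral {-s..s} (\<lambda>z. std_normal_density z - z\<^sup>2 * std_normal_density z) = 2 * s * std_normal_density s"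
proof -
  have h: "((\<lambda>z. std_normal_density z - z\<^sup>2 * std_normal_density z) has_integral
      (s * std_normal_density s - (-s) * std_normal_density (-s))) {-s..s}"
  proof (rule poly_integral[OF assms])
    fix x :: real
    show "((\<lambda>z. z * std_normal_density z) has_real_derivative
        (std_normal_density x - x\<^sup>2 * std_normal_density x)) (at x)"
      unfolding std_normal_density_def by (rule deriv_aux)
  qed
  then show ?thesis
    by (simp add: integral_unique std_normal_density_def)
qed

lemma c_lower: "3989/10000 \<le> 1 / sqrt (2 * pi)"
proof -
  have "2 * pi \<le> (10000/3989)\<^sup>2" using pi_approx by (simp add: power2_eq_square)
  then have "sqrt (2 * pi) \<le> 10000/3989" by (intro real_le_lsqrt) auto
  then show ?thesis by (simp add: field_simps)
qed

lemma phi_lower: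
  fixes s :: real assumes "s\<^sup>2 \<le> 2"
  shows "3989/10000 * (1 - s\<^sup>2/2) \<le> std_normal_density s"
proof -
  have "3989/10000 * (1 - s\<^sup>2/2) \<le> 1 / sqrt (2 * pi) * (1 - s\<^sup>2/2)"
    using c_lower assms by (intro mult_right_mono) auto
  also have "\<dots> \<le> 1 / sqrt (2 * pi) * exp (- s\<^sup>2/2)"
    using exp_neg_lower1[of "s\<^sup>2/2"] by (intro mult_left_mono) auto
  finally show ?thesis by (simp add: std_normal_density_def)
qed

lemma Wphi_lower:
  fixes s :: real assumes "0 \<le> s" "s\<^sup>2 \<le> 6"
  shows "2 * (3989/10000) * (s - s^3/6) \<le> integral {-s..s} std_normal_density"
proof -
  have h: "((\<lambda>z. 1 / sqrt (2 * pi) * (1 - z\<^sup>2/2)) has_integral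
      (1 / sqrt (2 * pi) * (s - s^3/6) - 1 / sqrt (2 * pi) * ((-s) - (-s)^3/6))) {-s..s}"
    by (rule poly_integral[OF assms(1)]) (auto intro!: derivative_eq_intros simp: power2_eq_square power3_eq_cube field_simps)
  have cont: "continuous_on {-s..s} std_normal_density"
    unfolding std_normal_density_def[abs_def] by (intro continuous_intros) auto
  have "integral {-s..s} (\<lambda>z. 1 / sqrt (2 * pi) * (1 - z\<^sup>2/2)) \<le> integral {-s..s} std_normal_density"
  proof (rule integral_le)
    show "(\<lambda>z. 1 / sqrt (2 * pi) * (1 - z\<^sup>2/2)) integrable_on {-s..s}" using h by blast
    show "std_normal_density integrable_on {-s..s}" using cont by (rule integrable_continuous_real)
    fix z :: real
    show "1 / sqrt (2 * pi) * (1 - z\<^sup>2/2) \<le> std_normal_density z"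
      unfolding std_normal_density_def using exp_neg_lower1[of "z\<^sup>2/2"] by (intro mult_left_mono) auto
  qed
  moreover have "integral {-s..s} (\<lambda>z. 1 / sqrt (2 * pi) * (1 - z\<^sup>2/2)) = 2 * (1 / sqrt (2 * pi)) * (s - s^3/6)"
    unfolding integral_unique[OF h] by (simp add: power3_eq_cube algebra_simps)
  moreover have "2 * (3989/10000) * (s - s^3/6) \<le> 2 * (1 / sqrt (2 * pi)) * (s - s^3/6)"
  proof -
    have "s^3 = s * s\<^sup>2" by (simp add: power2_eq_square power3_eq_cube)
    then have "s^3 \<le> s * 6" using assms by (simp add: mult_left_mono)
    then have "0 \<le> s - s^3/6" by simp
    then show ?thesis using c_lower by (intro mult_right_mono) auto
  qed
  ultimately show ?thesis by linarith
qed

lemma tail_eq: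
  fixes f :: "real \<Rightarrow> real" and s :: real
  assumes f: "integrable lborel f" and s: "0 \<le> s"
  shows "(\<integral>z. f z * indicator {z. s\<^sup>2 \<le> z\<^sup>2} z \<partial>lborel) = (\<integral>z. f z \<partial>lborel) - integral {-s..s} f"
proof -
  have pt: "f z * indicator {z. s\<^sup>2 \<le> z\<^sup>2} z = f z - indicator {-s<..<s} z *\<^sub>R f z" for z
  proof -
    have "s\<^sup>2 \<le> z\<^sup>2 \<longleftrightarrow> s \<le> \<bar>z\<bar>"
      using s abs_le_square_iff[of s z] by simp
    also have "\<dots> \<longleftrightarrow> \<not> (-s < z \<and> z < s)" by arith
    finally have "s\<^sup>2 \<le> z\<^sup>2 \<longleftrightarrow> \<not> (-s < z \<and> z < s)" .
    then show ?thesis by (auto simp: indicator_def)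
  qed
  have i2: "integrable lborel (\<lambda>z. indicator {-s<..<s} z *\<^sub>R f z)"
    by (rule integrable_mult_indicator) (auto simp: f)
  have si: "set_integrable lborel {-s..s} f"
    unfolding set_integrable_def by (rule integrable_mult_indicator) (auto simp: f)
  have "(\<integral>z. indicator {-s<..<s} z *\<^sub>R f z \<partial>lborel) = (LBINT x=ereal (-s)..ereal s. f x)"
    using s by (subst interval_integral_Ioo) (auto simp: set_lebesgue_integral_def)
  also have "\<dots> = (LBINT x : {-s..s}. f x)"
    by (rule interval_integral_Icc) (use s in simp)
  also have "\<dots> = integral {-s..s} f"
    by (rule set_borel_integral_eq_integral(2)[OF si])
  finally have eq: "(\<integral>z. indicator {-s<..<s} z *\<^sub>R f z \<partial>lborel) = integral {-s..s} f" .
  have "(\<integral>z. f z * indicator {z. s\<^sup>2 \<le> z\<^sup>2} z \<partial>lborel) = (\<integral>z. f z - indicator {-s<..<s} z *\<^sub>R f z \<partial>lborel)"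
    by (simp only: pt)
  also have "\<dots> = (\<integral>z. f z \<partial>lborel) - (\<integral>z. indicator {-s<..<s} z *\<^sub>R f z \<partial>lborel)"
    by (rule Bochner_Integration.integral_diff[OF f i2])
  finally show ?thesis using eq by simp
qed



theorem lemma1:
  fixes d :: "'a::euclidean_space" and \<tau> :: real
  assumes "norm d = 1" and "\<tau> \<ge> 0"
  shows "cond_exp_event std_gaussian (\<lambda>a. (a \<bullet> d)\<^sup>2) {a. (a \<bullet> d)\<^sup>2 \<ge> \<tau>}
           \<ge> (6 - \<tau> * erf (sqrt \<tau>)) / (6 - 3 * erf (sqrt \<tau>))"
proof -
  define s where "s = sqrt \<tau>"
  have s0: "0 \<le> s" and ts: "\<tau> = s\<^sup>2" using assms(2) by (auto simp: s_def)
  define S where "S = {z::real. s\<^sup>2 \<le> z\<^sup>2}"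
  define E1 where "E1 = (\<integral>z. std_normal_density z * (indicator S z * z\<^sup>2) \<partial>lborel)"
  define E2 where "E2 = (\<integral>z. std_normal_density z * indicator S z \<partial>lborel)"
  define e where "e = erf s"
  define ph where "ph = std_normal_density s"
  have D: "distributed (std_gaussian :: 'a measure) lborel (\<lambda>a. a \<bullet> d) std_normal_density"
    by (rule std_gaussian_proj[OF assms(1)])
  have Sm: "S \<in> sets borel"
  proof -
    have "closed S" unfolding S_def by (intro closed_Collect_le continuous_intros)
    then show ?thesis by simp
  qed
  have space: "space (std_gaussian :: 'a measure) = UNIV" by (simp add: std_gaussian_def)
  have ind: "indicator S (a \<bullet> d) = indicator {a. (a \<bullet> d)\<^sup>2 \<ge> \<tau>} a" for a
    by (simp add: S_def ts indicator_def)
  have num: "(\<integral>a. indicator {a. (a \<bullet> d)\<^sup>2 \<ge> \<tau>} a * (a \<bullet> d)\<^sup>2 \<partial>(std_gaussian :: 'a measure)) = E1"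
  proof -
    have "E1 = (\<integral>a. (\<lambda>z. indicator S z * z\<^sup>2) (a \<bullet> d) \<partial>(std_gaussian :: 'a measure))"
      unfolding E1_def
      by (rule distributed_integral[OF D]) (auto intro!: borel_measurable_times borel_measurable_indicator Sm)
    then show ?thesis by (simp add: ind)
  qed
  have den: "measure (std_gaussian :: 'a measure) {a. (a \<bullet> d)\<^sup>2 \<ge> \<tau>} = E2"
  proof -
    have "E2 = (\<integral>a. (\<lambda>z. indicator S z) (a \<bullet> d) \<partial>(std_gaussian :: 'a measure))"
      unfolding E2_def by (rule distributed_integral[OF D]) (auto intro!: borel_measurable_indicator Sm)
    also have "\<dots> = (\<integral>a. indicator {a. (a \<bullet> d)\<^sup>2 \<ge> \<tau>} a \<partial>(std_gaussian :: 'a measure))"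
      by (simp add: ind)
    also have "\<dots> = measure (std_gaussian :: 'a measure) {a. (a \<bullet> d)\<^sup>2 \<ge> \<tau>}"
      by (simp add: space)
    finally show ?thesis by simp
  qed
  have cond: "cond_exp_event std_gaussian (\<lambda>a. (a \<bullet> d)\<^sup>2) {a. (a \<bullet> d)\<^sup>2 \<ge> \<tau>} = E1 / E2"
    unfolding cond_exp_event_def num den ..
  have intphi: "integrable lborel std_normal_density" by simp
  have intphi2: "integrable lborel (\<lambda>z. std_normal_density z * z\<^sup>2)"
    using integrable_std_normal_moment[of 2] by simp
  have E2eq: "E2 = 1 - integral {-s..s} std_normal_density"
    unfolding E2_def S_def using tail_eq[OF intphi s0] by simp
  have E1eq: "E1 = 1 - integral {-s..s} (\<lambda>z. std_normal_density z * z\<^sup>2)"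
  proof -
    have "E1 = (\<integral>z. std_normal_density z * z\<^sup>2 * indicator S z \<partial>lborel)"
      unfolding E1_def by (simp add: ac_simps)
    also have "\<dots> = (\<integral>z. std_normal_density z * z\<^sup>2 \<partial>lborel) - integral {-s..s} (\<lambda>z. std_normal_density z * z\<^sup>2)"
      unfolding S_def by (rule tail_eq[OF intphi2 s0])
    also have "(\<integral>z. std_normal_density z * z\<^sup>2 \<partial>lborel) = 1"
      using integral_std_normal_moment_even[of 1] by (simp add: power2_eq_square)
    finally show ?thesis .
  qed
  have contphi: "continuous_on {-s..s} std_normal_density"
    unfolding std_normal_density_def[abs_def] by (intro continuous_intros) auto
  have contphi2: "continuous_on {-s..s} (\<lambda>z. std_normal_density z * z\<^sup>2)"
    unfolding std_normal_density_def[abs_def] by (intro continuous_intros) auto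
  have E12: "E1 = E2 + 2 * s * ph"
  proof -
    have "integral {-s..s} (\<lambda>z. std_normal_density z - z\<^sup>2 * std_normal_density z)
       = integral {-s..s} std_normal_density - integral {-s..s} (\<lambda>z. std_normal_density z * z\<^sup>2)"
      using integral_diff[OF integrable_continuous_real[OF contphi] integrable_continuous_real[OF contphi2]]
      by (simp add: ac_simps)
    then show ?thesis using phi_ftc[OF s0] E1eq E2eq ph_def by simp
  qed
  have phpos: "0 < std_normal_density x" for x by (simp add: normal_density_pos)
  have E2pos: "0 < E2"
  proof -
    have si: "integrable lborel (\<lambda>z. indicator {s..s+1} z *\<^sub>R std_normal_density z)"
      by (rule integrable_mult_indicator) auto
    have "(\<integral>z. indicator {s..s+1} z *\<^sub>R std_normal_density z \<partial>lborel) \<le> E2"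
      unfolding E2_def
    proof (rule integral_mono[OF si])
      show "integrable lborel (\<lambda>z. std_normal_density z * indicator S z)"
        by (rule integrable_real_mult_indicator[OF _ intphi]) (simp add: Sm)
      fix z :: real
      show "indicator {s..s+1} z *\<^sub>R std_normal_density z \<le> std_normal_density z * indicator S z"
      proof (cases "z \<in> {s..s+1}")
        case True
        then have "s\<^sup>2 \<le> z\<^sup>2" using s0 by (intro power_mono) auto
        then have "z \<in> S" unfolding S_def by simp
        then show ?thesis using True by (simp add: indicator_def)
      qed (auto simp: indicator_def)
    qed
    moreover have "(\<integral>z. indicator {s..s+1} z *\<^sub>R std_normal_density z \<partial>lborel) = integral {s..s+1} std_normal_density"
      using set_borel_integral_eq_integral(2)[of "{s..s+1}" std_normal_density] si
      by (simp add: set_integrable_def set_lebesgue_integral_def)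
    moreover have "std_normal_density (s+1) \<le> integral {s..s+1} std_normal_density"
    proof -
      have c: "continuous_on {s..s+1} std_normal_density"
        unfolding std_normal_density_def[abs_def] by (intro continuous_intros) auto
      have "integral {s..s+1} (\<lambda>_. std_normal_density (s+1)) \<le> integral {s..s+1} std_normal_density"
      proof (rule integral_le)
        show "std_normal_density integrable_on {s..s+1}" by (rule integrable_continuous_real[OF c])
        fix z assume z: "z \<in> {s..s+1}"
        then have "z\<^sup>2 \<le> (s+1)\<^sup>2" using s0 by (intro power_mono) auto
        then show "std_normal_density (s+1) \<le> std_normal_density z"
          unfolding std_normal_density_def by (intro mult_left_mono) auto
      qed auto
      then show ?thesis by simp
    qed
    ultimately show ?thesis using phpos[of "s+1"] by linarith
  qed
  have e0: "0 \<le> e" and e1: "e \<le> 1" unfolding e_def by (rule erf_nonneg, rule erf_le1)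
  show ?thesis
  proof (cases "3/2 \<le> \<tau>")
    case True
    have "\<tau> * E2 \<le> E1"
    proof -
      have "(\<integral>z. \<tau> * (std_normal_density z * indicator S z) \<partial>lborel) \<le> E1"
        unfolding E1_def
      proof (rule integral_mono)
        show "integrable lborel (\<lambda>z. \<tau> * (std_normal_density z * indicator S z))"
          by (intro integrable_mult_right integrable_real_mult_indicator intphi) (simp add: Sm)
        have "integrable lborel (\<lambda>z. std_normal_density z * z\<^sup>2 * indicator S z)"
          by (rule integrable_real_mult_indicator[OF _ intphi2]) (simp add: Sm)
        then show "integrable lborel (\<lambda>z. std_normal_density z * (indicator S z * z\<^sup>2))"
          by (simp add: ac_simps)
        fix z :: real
        show "\<tau> * (std_normal_density z * indicator S z) \<le> std_normal_density z * (indicator S z * z\<^sup>2)"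
        proof (cases "z \<in> S")
          case True
          then have "s\<^sup>2 \<le> z\<^sup>2" by (simp add: S_def)
          then have "\<tau> * std_normal_density z \<le> z\<^sup>2 * std_normal_density z"
            using ts by (intro mult_right_mono) auto
          then show ?thesis using True by (simp add: indicator_def ac_simps)
        qed (simp add: indicator_def)
      qed
      then show ?thesis unfolding E2_def by simp
    qed
    then have L: "\<tau> \<le> E1 / E2" using E2pos by (simp add: pos_le_divide_eq)
    have "\<tau> * e \<le> \<tau>" using e1 assms(2) by (simp add: mult_left_le)
    moreover have "\<tau> * (6 - 3 * e) = 6 * \<tau> - 3 * (\<tau> * e)" by (simp add: algebra_simps)
    ultimately have "6 - \<tau> * e \<le> \<tau> * (6 - 3 * e)" using True by linarith
    then have R: "(6 - \<tau> * e) / (6 - 3 * e) \<le> \<tau>" using e1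
      by (simp add: pos_divide_le_eq mult.commute)
    show ?thesis unfolding cond using L R by (simp add: s_def e_def)
  next
    case False
    then have t32: "s\<^sup>2 \<le> 3/2" using ts by simp
    define eU where "eU = 11284/10000 * (s - s^3/3 + s^5/10)"
    define phL where "phL = 3989/10000 * (1 - s\<^sup>2/2)"
    define QU where "QU = 1 - 2 * (3989/10000) * (s - s^3/6)"
    have eU: "e \<le> eU" unfolding e_def eU_def by (rule erf_upper[OF s0])
    have phL: "phL \<le> ph" unfolding phL_def ph_def using t32 by (intro phi_lower) simp
    have phL0: "0 \<le> phL" unfolding phL_def using t32 by simp
    have QU: "E2 \<le> QU" unfolding E2eq QU_def using Wphi_lower[OF s0] t32 by simp
    have P: "2 * s * phL * (6 - 3 * eU) - QU * eU * (3 - s\<^sup>2) \<ge> 0"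
      unfolding phL_def eU_def QU_def using poly_final[OF s0 t32] by simp
    have k1: "2 * s * phL * (6 - 3 * eU) \<le> 2 * s * ph * (6 - 3 * e)"
    proof -
      have "2 * s * phL * (6 - 3 * eU) \<le> 2 * s * phL * (6 - 3 * e)"
        using eU s0 phL0 by (intro mult_left_mono) auto
      also have "\<dots> \<le> 2 * s * ph * (6 - 3 * e)"
        using phL s0 e1 by (intro mult_right_mono mult_left_mono) auto
      finally show ?thesis .
    qed
    have k2: "E2 * e * (3 - s\<^sup>2) \<le> QU * eU * (3 - s\<^sup>2)"
    proof -
      have "E2 * e \<le> QU * eU"
        using QU eU e0 E2pos by (intro mult_mono) auto
      then show ?thesis using t32 by (intro mult_right_mono) auto
    qed
    have key: "E2 * e * (3 - s\<^sup>2) \<le> 2 * s * ph * (6 - 3 * e)" using P k1 k2 by linarith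
    have "(E2 + 2 * s * ph) * (6 - 3 * e) - (6 - s\<^sup>2 * e) * E2 = 2 * s * ph * (6 - 3 * e) - E2 * e * (3 - s\<^sup>2)"
      by (simp add: algebra_simps)
    then have "(6 - s\<^sup>2 * e) * E2 \<le> (E2 + 2 * s * ph) * (6 - 3 * e)" using key by linarith
    then have "(6 - s\<^sup>2 * e) / (6 - 3 * e) \<le> (E2 + 2 * s * ph) / E2"
      using E2pos e1 by (simp add: pos_divide_le_eq pos_le_divide_eq mult.commute)
    then have g: "(6 - \<tau> * e) / (6 - 3 * e) \<le> E1 / E2" using E12 ts by simp
    have ee: "erf (sqrt \<tau>) = e" by (simp add: e_def s_def)
    show ?thesis unfolding cond ee using g by simp
  qed
qed

end
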